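(* Fix a nonzero $\alpha\in A_{\infty_1}$, integers $N\ge 0$ and $l\in\{0,\dots,d-1\}$, and put $\varepsilon=q^{-dN-l}$ and $\delta=q^{-dN}\varepsilon$. Suppose $\delta<|\alpha|^{-1}$. Then for every $x\in\alpha\hat\Lambda_\varepsilon(f)$ one has $\operatorname{dist}(x,\hat\Lambda_\varepsilon(f))<|\alpha|\delta$, where $\hat\Lambda_\varepsilon(f):=f^{-N}\sqrt D\,\Lambda_\varepsilon(f)$ and $\operatorname{dist}(x,Y)=\inf_{y\in Y}|x-y|$.
   Context: Let $q$ be a power of a prime, $k=\mathbb F_q(T)$, $A=\mathbb F_q[T]$, $k_\infty=\mathbb F_q((1/T))$ with absolute value $|x|=q^{\deg_T x}$. For $x\in k_\infty$ let $\|x\|$ be the distance from $x$ to $A$, and for $f\in k_\infty$, $\varepsilon>0$ let $\Lambda_\varepsilon(f)=\{\lambda\in A:\|\lambda f\|<\varepsilon\}$. Let $f\in k_\infty\setminus k$ be a root of $X^2-aX-b$ with $a\in A$ monic, $d:=\deg_T a\ge1$, $b\in\mathbb F_q^*$, chosen with $|f|=q^d$ (its conjugate has absolute value $q^{-d}$). Let $D=a^2+4b$, with $\sqrt D$ chosen so that $f=(a+\sqrt D)/2$ in odd characteristic and $\sqrt D=a$ in characteristic $2$. Let $K=k(f)\subset k_\infty$, $\infty_1$ the place of $K$ induced by $K\subset k_\infty$, and $A_{\infty_1}$ the ring of elements of $K$ regular away from $\infty_1$ (one has $A_{\infty_1}=\mathbb F_q[f,fT,\dots,fT^{d-1}]$);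 absolute values of elements of $K$ are taken in $k_\infty$. *)

theory Defs
  imports "HOL-Computational_Algebra.Polynomial" "HOL-Computational_Algebra.Formal_Laurent_Series"
    Complex_Main "HOL-Library.Cardinality"
begin

text \<open>Model: F_q is a finite field type 'a (q = CARD('a)); k_infinity = F_q((1/T)) is the
  type of formal Laurent series 'a fls in the variable X = 1/T, so T = X^{-1} = fls_X_inv.
  A = F_q[T] is 'a poly, embedded via T |-> fls_X_inv.\<close>

definition embA :: "'a::field poly \<Rightarrow> 'a fls" where
  "embA p = poly (map_poly fls_const p) fls_X_inv"

definition Tinf :: "'a::field fls" where
  "Tinf = fls_X_inv"

text \<open>|x| = q^(deg_T x) = q^(- X-adic order), |0| = 0.\<close>
definition absv :: "'a::{field,finite} fls \<Rightarrow> real" where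
  "absv x = (if x = 0 then 0 else real CARD('a) powr (- real_of_int (fls_subdegree x)))"

definition distA :: "'a::{field,finite} fls \<Rightarrow> real" where
  "distA x = Inf ((\<lambda>p. absv (x - embA p)) ` UNIV)"

definition Lambda :: "real \<Rightarrow> 'a::{field,finite} fls \<Rightarrow> 'a poly set" where
  "Lambda \<epsilon> f = {lam. distA (embA lam * f) < \<epsilon>}"

definition distS :: "'a::{field,finite} fls \<Rightarrow> 'a fls set \<Rightarrow> real" where
  "distS x Y = Inf ((\<lambda>y. absv (x - y)) ` Y)"

definition in_k :: "'a::field fls \<Rightarrow> bool" where
  "in_k x \<longleftrightarrow> (\<exists>p r. r \<noteq> 0 \<and> embA r * x = embA p)"

inductive_set Ainf1 :: "'a::field fls \<Rightarrow> nat \<Rightarrow> 'a fls set" for f :: "'a fls" and d :: nat where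
  const: "fls_const c \<in> Ainf1 f d"
| gen: "i < d \<Longrightarrow> f * Tinf ^ i \<in> Ainf1 f d"
| add: "x \<in> Ainf1 f d \<Longrightarrow> y \<in> Ainf1 f d \<Longrightarrow> x + y \<in> Ainf1 f d"
| mult: "x \<in> Ainf1 f d \<Longrightarrow> y \<in> Ainf1 f d \<Longrightarrow> x * y \<in> Ainf1 f d"

text \<open>sqrt D = 2f - a: equals (a + sqrt D)/2 relation in odd characteristic, and equals a
  in characteristic 2 (since 2f - a = -a = a there).\<close>
definition sqrtD :: "'a::field fls \<Rightarrow> 'a poly \<Rightarrow> 'a fls" where
  "sqrtD f a = 2 * f - embA a"

definition Lambda_hat :: "nat \<Rightarrow> real \<Rightarrow> 'a::{field,finite} fls \<Rightarrow> 'a poly \<Rightarrow> 'a fls set" where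
  "Lambda_hat N \<epsilon> f a = (\<lambda>lam. inverse f ^ N * sqrtD f a * embA lam) ` Lambda \<epsilon> f"

end

theory Submission
  imports Defs
begin

lemma quad_mult_id:
  fixes g :: "'b::comm_ring_1"
  assumes "g^2 = A*g + B"
  shows "(U1 + V1*g)*(U2 + V2*g) = (U1*U2 + V1*V2*B) + (U1*V2 + U2*V1 + V1*V2*A)*g"
proof -
  have "(U1 + V1*g)*(U2 + V2*g) = U1*U2 + (U1*V2+U2*V1)*g + V1*V2*g^2"
    by (simp add: algebra_simps power2_eq_square)
  also have "\<dots> = (U1*U2 + V1*V2*B) + (U1*V2 + U2*V1 + V1*V2*A)*g"
    by (simp add: assms algebra_simps)
  finally show ?thesis .
qed

lemma embA_0[simp]: "embA 0 = 0" by (simp add: embA_def)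
lemma embA_pCons: "embA (pCons c p) = fls_const c + fls_X_inv * embA p"
  by (simp add: embA_def map_poly_pCons)
lemma embA_const[simp]: "embA [:c:] = fls_const c"
  by (simp add: embA_pCons)
lemma embA_1[simp]: "embA 1 = 1"
  using embA_const[of 1] by (simp add: one_pCons)

lemma embA_add[simp]: "embA (p + q) = embA p + embA q"
proof (induction p arbitrary: q)
  case (pCons c p)
  then show ?case by (cases q) (simp add: embA_pCons fls_plus_const[symmetric] algebra_simps)
qed simp

lemma embA_smult[simp]: "embA (smult c p) = fls_const c * embA p"
  by (induction p) (simp_all add: embA_pCons algebra_simps)

lemma embA_mult[simp]: "embA (p * q) = embA p * embA q"
  by (induction p) (simp_all add: embA_pCons algebra_simps)

lemma embA_uminus[simp]: "embA (- p) = - embA p"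
proof -
  have "embA p + embA (-p) = 0" using embA_add[of p "-p"] by simp
  then have "embA (-p) + embA p = 0" by (simp add: add.commute)
  then show ?thesis by (subst eq_neg_iff_add_eq_0)
qed

lemma embA_diff[simp]: "embA (p - q) = embA p - embA q"
  using embA_add[of p "-q"] by simp

lemma embA_X_pow: "embA ([:0,1:] ^ i) = fls_X_inv ^ i"
  by (induction i) (simp_all add: embA_pCons)

lemma card_ge2: "CARD('a::{field,finite}) \<ge> 2"
proof -
  have "card {0::'a, 1} \<le> CARD('a)" by (rule card_mono) auto
  then show ?thesis by simp
qed

lemma q_gt1: "real CARD('a::{field,finite}) > 1"
  using card_ge2[where 'a='a] by simp

lemma absv_nonneg: "absv x \<ge> 0" by (simp add: absv_def)

lemma absv_pos: "x \<noteq> 0 \<Longrightarrow> absv x > 0"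
  using q_gt1[where 'a='a] by (simp add: absv_def)

lemma absv_0[simp]: "absv 0 = 0" by (simp add: absv_def)

lemma absv_eq_0_iff: "absv x = 0 \<longleftrightarrow> x = 0"
  using absv_pos[of x] by (cases "x = 0") auto

lemma absv_mult: "absv (x * y) = absv x * absv y"
  by (cases "x = 0"; cases "y = 0") (simp_all add: absv_def powr_add[symmetric] algebra_simps)

lemma absv_uminus[simp]: "absv (- x) = absv x"
  by (simp add: absv_def fls_subdegree_minus)

lemma absv_const: "c \<noteq> 0 \<Longrightarrow> absv (fls_const c) = 1"
  by (simp add: absv_def)

lemma absv_const_le: "absv (fls_const c) \<le> 1"
  by (cases "c = 0") (simp_all add: absv_const)

lemma absv_one[simp]: "absv 1 = 1"
  using absv_const[of 1] by simp

lemma absv_X_inv: "absv (fls_X_inv :: 'a::{field,finite} fls) = real CARD('a)"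
  by (simp add: absv_def)

lemma absv_power: "absv (x ^ n) = absv x ^ n"
  by (induction n) (simp_all add: absv_mult)

lemma absv_inverse: "absv (inverse x) = inverse (absv x)"
proof (cases "x = 0")
  case False
  have "absv x * absv (inverse x) = 1" using False by (metis absv_mult absv_one right_inverse)
  then show ?thesis by (rule inverse_unique[symmetric])
qed simp

lemma absv_add_le: "absv (x + y) \<le> max (absv x) (absv y)"
proof (cases "x = 0 \<or> y = 0 \<or> x + y = 0")
  case True then show ?thesis by (auto simp: absv_nonneg max_def)
next
  case False
  have "fls_subdegree (x + y) \<ge> min (fls_subdegree x) (fls_subdegree y)"
    using False fls_plus_subdegree by blast
  then have "- real_of_int (fls_subdegree (x+y)) \<le> max (- real_of_int (fls_subdegree x)) (- real_of_int (fls_subdegree y))"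
    by linarith
  then have "real CARD('a) powr (- real_of_int (fls_subdegree (x+y))) \<le> real CARD('a) powr max (- real_of_int (fls_subdegree x)) (- real_of_int (fls_subdegree y))"
    using q_gt1[where 'a='a] by (intro powr_mono) auto
  also have "\<dots> = max (real CARD('a) powr (- real_of_int (fls_subdegree x))) (real CARD('a) powr (- real_of_int (fls_subdegree y)))"
    using q_gt1[where 'a='a] by (auto simp: max_def powr_le_cancel_iff)
  finally show ?thesis using False by (simp add: absv_def)
qed

lemma absv_add_eq: assumes "absv x < absv y" shows "absv (x + y) = absv y"
proof (cases "x = 0")
  case True then show ?thesis by simp
next
  case False
  have y: "y \<noteq> 0" using assms absv_nonneg[of x] by auto
  have "fls_subdegree y < fls_subdegree x"
    using assms False y q_gt1[where 'a='a] by (simp add: absv_def powr_less_cancel_iff)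
  then have "fls_subdegree (x + y) = fls_subdegree y" by (rule fls_subdegree_add_eq2[OF y])
  moreover have "x + y \<noteq> 0"
  proof
    assume "x + y = 0" then have "y = - x" by (simp add: eq_neg_iff_add_eq_0 add.commute)
    then show False using assms by simp
  qed
  ultimately show ?thesis using y by (simp add: absv_def)
qed

lemma absv_add_eq': "absv x < absv y \<Longrightarrow> absv (y + x) = absv y"
  using absv_add_eq by (metis add.commute)

lemma absv_embA: "p \<noteq> 0 \<Longrightarrow> absv (embA p :: 'a::{field,finite} fls) = real CARD('a) ^ degree p"
proof (induction p)
  case (pCons c p)
  show ?case
  proof (cases "p = 0")
    case True
    then have "c \<noteq> 0" using pCons by auto
    then show ?thesis using True by (simp add: embA_pCons absv_const)
  next
    case False
    have h: "absv (fls_X_inv * embA p :: 'a fls) = real CARD('a) ^ Suc (degree p)"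
      using pCons.IH[OF False] by (simp add: absv_mult absv_X_inv)
    have "real CARD('a) ^ Suc (degree p) > 1"
      using q_gt1[where 'a='a] by (intro one_less_power) auto
    then have lt: "absv (fls_const c :: 'a fls) < absv (fls_X_inv * embA p :: 'a fls)"
      using absv_const_le[of c] h by linarith
    show ?thesis using absv_add_eq[OF lt] h False by (simp add: embA_pCons)
  qed
qed simp

lemma absv_embA_ge1: "p \<noteq> 0 \<Longrightarrow> absv (embA p :: 'a::{field,finite} fls) \<ge> 1"
  using absv_embA[of p] q_gt1[where 'a='a] by simp

lemma Ainf1_inv:
  fixes f g :: "'a::{field,finite} fls"
  assumes "x \<in> Ainf1 f d"
    and f2: "f^2 = embA a * f + fls_const b" and g2: "g^2 = embA a * g + fls_const b"
    and gabs: "absv g = inverse (real CARD('a) ^ d)"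
  shows "\<exists>u v. x = embA u + embA v * f \<and> absv (embA u + embA v * g) \<le> 1"
  using assms(1)
proof induction
  case (const c)
  show ?case
    by (rule exI[of _ "[:c:]"], rule exI[of _ 0]) (simp add: absv_const_le)
next
  case (gen i)
  have "absv (fls_X_inv ^ i * g) = real CARD('a) ^ i * inverse (real CARD('a) ^ d)"
    by (simp add: absv_mult absv_power absv_X_inv gabs)
  also have "\<dots> \<le> 1"
  proof -
    have "real CARD('a) ^ i \<le> real CARD('a) ^ d"
      using q_gt1[where 'a='a] gen by (intro power_increasing) auto
    then show ?thesis using q_gt1[where 'a='a] by (simp add: field_simps)
  qed
  finally have h: "absv (fls_X_inv ^ i * g) \<le> 1" .
  show ?case
    by (rule exI[of _ "0::'a poly"], rule exI[of _ "[:0,1:]^i"]) (use h in \<open>simp add: embA_X_pow Tinf_def mult.commute\<close>)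
next
  case (add x y)
  from add.IH obtain u1 v1 u2 v2 where h: "x = embA u1 + embA v1 * f" "absv (embA u1 + embA v1 * g) \<le> 1"
    "y = embA u2 + embA v2 * f" "absv (embA u2 + embA v2 * g) \<le> 1" by blast
  have e: "embA (u1+u2) + embA (v1+v2) * g = (embA u1 + embA v1 * g) + (embA u2 + embA v2 * g)"
    by (simp add: algebra_simps)
  have le: "absv (embA (u1+u2) + embA (v1+v2) * g) \<le> 1"
    unfolding e using h absv_add_le[of "embA u1 + embA v1 * g" "embA u2 + embA v2 * g"] by linarith
  show ?case
    apply (rule exI[of _ "u1+u2"], rule exI[of _ "v1+v2"], rule conjI)
     apply (simp add: h algebra_simps)
    by (rule le)
next
  case (mult x y)
  from mult.IH obtain u1 v1 u2 v2 where h: "x = embA u1 + embA v1 * f" "absv (embA u1 + embA v1 * g) \<le> 1"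
    "y = embA u2 + embA v2 * f" "absv (embA u2 + embA v2 * g) \<le> 1" by blast
  have ef: "x * y = embA (u1*u2 + v1*v2*[:b:]) + embA (u1*v2+u2*v1+v1*v2*a) * f"
    using quad_mult_id[OF f2, of "embA u1" "embA v1" "embA u2" "embA v2"] h by simp
  have eg: "(embA u1 + embA v1 * g) * (embA u2 + embA v2 * g) = embA (u1*u2 + v1*v2*[:b:]) + embA (u1*v2+u2*v1+v1*v2*a) * g"
    using quad_mult_id[OF g2, of "embA u1" "embA v1" "embA u2" "embA v2"] by simp
  have "absv ((embA u1 + embA v1 * g) * (embA u2 + embA v2 * g)) \<le> 1"
    using h(2,4) absv_nonneg[of "embA u1 + embA v1 * g"] absv_nonneg[of "embA u2 + embA v2 * g"]
    unfolding absv_mult by (metis mult_le_one)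
  then show ?case using ef eg by metis
qed

lemma powr_conv: "real CARD('a::{field,finite}) powr (- real (d * N)) = inverse (real CARD('a) ^ d) ^ N"
proof -
  have "real CARD('a) powr (real (d*N)) = real CARD('a) ^ (d*N)"
    using q_gt1[where 'a='a] by (intro powr_realpow) auto
  then show ?thesis by (simp add: powr_minus power_mult power_inverse)
qed

theorem lemma2:
  fixes f :: "'a::{field,finite} fls" and a :: "'a poly" and b :: 'a
    and d N l :: nat and \<alpha> :: "'a fls" and \<epsilon> \<delta> :: real
  assumes monic: "lead_coeff a = 1"
    and deg: "degree a = d" and d_pos: "d \<ge> 1"
    and b_nz: "b \<noteq> 0"
    and root: "f ^ 2 - embA a * f - fls_const b = 0"
    and f_notin_k: "\<not> in_k f"
    and abs_f: "absv f = real CARD('a) ^ d"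
    and alpha: "\<alpha> \<in> Ainf1 f d" "\<alpha> \<noteq> 0"
    and l: "l < d"
    and eps: "\<epsilon> = real CARD('a) powr (- real (d * N + l))"
    and delta: "\<delta> = real CARD('a) powr (- real (d * N)) * \<epsilon>"
    and small: "\<delta> < inverse (absv \<alpha>)"
  shows "\<forall>x \<in> (\<lambda>y. \<alpha> * y) ` Lambda_hat N \<epsilon> f a.
           distS x (Lambda_hat N \<epsilon> f a) < absv \<alpha> * \<delta>"
proof
  fix x assume "x \<in> (\<lambda>y. \<alpha> * y) ` Lambda_hat N \<epsilon> f a"
  then obtain lam where lam: "lam \<in> Lambda \<epsilon> f"
    and xdef: "x = \<alpha> * (inverse f ^ N * sqrtD f a * embA lam)"
    by (auto simp: Lambda_hat_def)
  define q where "q = real CARD('a)"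
  have q1: "q > 1" unfolding q_def by (rule q_gt1)
  have qd1: "q ^ d > 1" using q1 d_pos by (intro one_less_power) auto
  define g where "g = embA a - f"
  have f2: "f^2 = embA a * f + fls_const b" using root by (simp add: algebra_simps)
  have g2: "g^2 = embA a * g + fls_const b"
    using f2 unfolding g_def by (simp add: algebra_simps power2_eq_square)
  have fg: "f * g = - fls_const b"
    using f2 unfolding g_def by (simp add: algebra_simps power2_eq_square)
  have absg: "absv g = inverse (q ^ d)"
  proof -
    have "absv f * absv g = 1" using fg b_nz by (simp add: absv_mult[symmetric] absv_const)
    then show ?thesis using abs_f q1 unfolding q_def by (simp add: field_simps)
  qed
  have gltf: "absv g < q ^ d" using absg qd1
    by (metis dual_order.strict_trans inverse_less_1_iff less_numeral_extra(1) zero_less_one)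
  have sD: "sqrtD f a = f - g" unfolding sqrtD_def g_def by (simp add: algebra_simps mult_2)
  have abssD: "absv (sqrtD f a) = q ^ d"
    using absv_add_eq'[of "- g" f] gltf abs_f unfolding sD q_def by simp
  have epos: "\<epsilon> > 0" using eps q1 unfolding q_def by simp
  have dpos: "\<delta> > 0" using delta epos q1 unfolding q_def by simp
  have apos: "absv \<alpha> > 0" using absv_pos alpha(2) by blast
  have bdd: "\<And>S. bdd_below ((\<lambda>y. absv y) ` S)"
    by (rule bdd_belowI[of _ 0]) (auto simp: absv_nonneg)
  from lam have "distA (embA lam * f) < \<epsilon>" by (simp add: Lambda_def)
  then obtain p where p: "absv (embA lam * f - embA p) < \<epsilon>"
    unfolding distA_def using cInf_lessD[of "(\<lambda>p. absv (embA lam * f - embA p)) ` UNIV" \<epsilon>] by auto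
  define r where "r = embA lam * f - embA p"
  obtain u v where uv: "\<alpha> = embA u + embA v * f" and ag: "absv (embA u + embA v * g) \<le> 1"
    using Ainf1_inv[OF alpha(1) f2 g2 absg[unfolded q_def]] by blast
  define mu where "mu = u * lam + v * p"
  define P' where "P' = u*p + v*a*p + v*[:b:]*lam"
  have idmu: "embA mu * f - embA P' = r * (embA u + embA v * g)"
  proof -
    have "embA mu * f - embA P' - r * (embA u + embA v * g) = embA v * embA lam * (f^2 - embA a * f - fls_const b)"
      unfolding mu_def P'_def r_def g_def by (simp add: algebra_simps power2_eq_square)
    then show ?thesis using root by simp
  qed
  have "distA (embA mu * f) \<le> absv (embA mu * f - embA P')"
    unfolding distA_def
    by (rule cInf_lower) (auto intro!: bdd_belowI[of _ 0] simp: absv_nonneg)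
  also have "\<dots> \<le> absv r"
    using idmu ag absv_nonneg[of r] by (simp add: absv_mult mult_left_le)
  finally have mu: "mu \<in> Lambda \<epsilon> f" using p unfolding Lambda_def r_def by simp
  define y where "y = inverse f ^ N * sqrtD f a * embA mu"
  have yin: "y \<in> Lambda_hat N \<epsilon> f a" using mu unfolding y_def Lambda_hat_def by blast
  have "distS x (Lambda_hat N \<epsilon> f a) \<le> absv (x - y)"
    unfolding distS_def
    by (rule cInf_lower) (use yin in \<open>auto intro!: bdd_belowI[of _ 0] simp: absv_nonneg\<close>)
  also have "absv (x - y) < absv \<alpha> * \<delta>"
  proof -
    have xy: "x - y = inverse f ^ N * sqrtD f a * (embA v * r)"
      unfolding xdef y_def uv mu_def r_def by (simp add: algebra_simps)
    show ?thesis
    proof (cases "v = 0")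
      case True
      then show ?thesis using xy apos dpos by simp
    next
      case False
      have "absv (embA v * sqrtD f a) = absv (embA v) * q ^ d" by (simp add: absv_mult abssD)
      moreover have "absv (embA v) * q ^ d \<ge> q ^ d"
        using absv_embA_ge1[OF False] qd1 by simp
      ultimately have lt: "absv (embA u + embA v * g) < absv (embA v * sqrtD f a)"
        using ag qd1 by linarith
      have "\<alpha> = (embA u + embA v * g) + embA v * sqrtD f a"
        unfolding uv sD by (simp add: algebra_simps)
      then have aa: "absv \<alpha> = absv (embA v) * q ^ d"
        using absv_add_eq[OF lt] by (simp add: absv_mult abssD)
      have "absv (x - y) = inverse (q ^ d) ^ N * (absv (embA v) * q ^ d) * absv r"
        unfolding xy using abs_f unfolding q_def
        by (simp add: absv_mult absv_power absv_inverse abssD[unfolded q_def] mult_ac)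
      also have "\<dots> = inverse (q ^ d) ^ N * absv \<alpha> * absv r" using aa by simp
      also have "\<dots> < inverse (q ^ d) ^ N * absv \<alpha> * \<epsilon>"
        using p apos q1 unfolding r_def by (intro mult_strict_left_mono) auto
      also have "\<dots> = absv \<alpha> * \<delta>"
        using delta powr_conv[where 'a='a, of d N] unfolding q_def by simp
      finally show ?thesis .
    qed
  qed
  finally show "distS x (Lambda_hat N \<epsilon> f a) < absv \<alpha> * \<delta>" .
qed

end
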